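(* Let $S$ be a finite set and let $\{A_1,\dots,A_k\}\subseteq M_S([0,\infty))$ be an irreducible family of nonzero pairwise commuting matrices. Let $F\subseteq\mathbb{N}^k$ be a finite set with $A_F(s,t)>0$ for all $s,t\in S$, and let $x$ be the unimodular Perron-Frobenius eigenvector of $A_F$. Then: (1)(a) $x$ is the unique non-negative vector of unit $1$-norm that is a common eigenvector of all the $A_i$; (b) $A_ix=\rho(A_i)x$ for each $i$, and each $\rho(A_i)>0$; (c) if $z\in\mathbb{C}^S$ and $A_iz=\rho(A_i)z$ for all $i$, then $z\in\mathbb{C}x$. (2) Suppose $y\in[0,\infty)^S$ is nonzero and $\lambda\in[0,\infty)^k$ satisfies $A_iy\le\lambda_iy$ (entrywise) for all $i$. (a) Then $y_s>0$ for every $s\in S$, and $\lambda_i\ge\rho(A_i)$ for all $i$. (b) If moreover $\lambda_i=\rho(A_i)$ for all $i$ and $y$ has unit $1$-norm, then $y=x$. (3) For $n\in\mathbb{N}^k$, $\rho(A^n)=\prod_{i=1}^k\rho(A_i)^{n_i}>0$.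
   Context: For $n\in\mathbb{N}^k$, $A^n=\prod_iA_i^{n_i}$, and for finite $F\subseteq\mathbb{N}^k$, $A_F=\sum_{n\in F}A^n$. The family $\{A_1,\dots,A_k\}$ is irreducible if each $A_i\neq0$ and there is a finite $F\subseteq\mathbb{N}^k$ with $A_F(s,t)>0$ for all $s,t\in S$. $\rho$ denotes spectral radius. For an irreducible non-negative matrix $B$, its unimodular Perron-Frobenius eigenvector is the unique positive eigenvector with eigenvalue $\rho(B)$ and $1$-norm $1$. *)

theory Defs
  imports "Jordan_Normal_Form.Spectral_Radius"
begin

text \<open>The finite set S is represented as the index set {0..<d} of d x d matrices.
  The family A_1..A_k is represented as A 0, ..., A (k-1).\<close>

definition nvecs :: "nat \<Rightarrow> (nat \<Rightarrow> nat) set" where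
  "nvecs k = {n. \<forall>i\<ge>k. n i = 0}"

definition mpow :: "nat \<Rightarrow> nat \<Rightarrow> (nat \<Rightarrow> real mat) \<Rightarrow> (nat \<Rightarrow> nat) \<Rightarrow> real mat" where
  "mpow d k A n = foldr (\<lambda>i M. (A i ^\<^sub>m n i) * M) [0..<k] (1\<^sub>m d)"

definition msum :: "nat \<Rightarrow> nat \<Rightarrow> (nat \<Rightarrow> real mat) \<Rightarrow> (nat \<Rightarrow> nat) set \<Rightarrow> real mat" where
  "msum d k A F = mat d d (\<lambda>(s,t). \<Sum>n\<in>F. mpow d k A n $$ (s,t))"

definition irreducible_family :: "nat \<Rightarrow> nat \<Rightarrow> (nat \<Rightarrow> real mat) \<Rightarrow> bool" where
  "irreducible_family d k A \<longleftrightarrow> (\<forall>i<k. A i \<noteq> 0\<^sub>m d d) \<and>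
     (\<exists>F. finite F \<and> F \<subseteq> nvecs k \<and> (\<forall>s<d. \<forall>t<d. msum d k A F $$ (s,t) > 0))"

definition rho :: "real mat \<Rightarrow> real" where
  "rho B = spectral_radius (map_mat complex_of_real B)"

definition norm1 :: "real vec \<Rightarrow> real" where
  "norm1 v = (\<Sum>s<dim_vec v. \<bar>v $ s\<bar>)"

definition unimodular_PF_eigenvector :: "real mat \<Rightarrow> real vec \<Rightarrow> bool" where
  "unimodular_PF_eigenvector B x \<longleftrightarrow> x \<in> carrier_vec (dim_row B) \<and>
     (\<forall>s<dim_vec x. x $ s > 0) \<and> B *\<^sub>v x = rho B \<cdot>\<^sub>v x \<and> norm1 x = 1"

end

theory Submission imports Defs begin

lemma mv_sum:
  fixes B :: "'a::comm_semiring_0 mat"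
  assumes "B \<in> carrier_mat d d" "v \<in> carrier_vec d" "s < d"
  shows "(B *\<^sub>v v) $ s = (\<Sum>t<d. B $$ (s,t) * v $ t)"
  using assms by (auto simp: scalar_prod_def atLeast0LessThan intro!: sum.cong)

lemma ex_argmax: "(d::nat) > 0 \<Longrightarrow> \<exists>s<d. \<forall>t<d. (f t :: real) \<le> f s"
proof -
  assume "d > 0"
  then have "Max (f ` {..<d}) \<in> f ` {..<d}" by (intro Max_in) auto
  then obtain s where "s < d" "f s = Max (f ` {..<d})" by auto
  then show ?thesis by (metis Max_ge finite_imageI finite_lessThan imageI lessThan_iff)
qed

lemma ex_argmin: "(d::nat) > 0 \<Longrightarrow> \<exists>s<d. \<forall>t<d. (f t :: real) \<ge> f s"
  using ex_argmax[of d "\<lambda>t. - f t"] by force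

lemma realL3:
  fixes P :: "real mat"
  assumes P: "P \<in> carrier_mat d d" "\<forall>s<d. \<forall>t<d. P $$ (s,t) > 0"
    and x: "x \<in> carrier_vec d" "\<forall>s<d. x $ s > 0" "P *\<^sub>v x = r \<cdot>\<^sub>v x"
    and w: "w \<in> carrier_vec d" "P *\<^sub>v w = r \<cdot>\<^sub>v w" and d: "d > 0"
  shows "\<exists>c. w = c \<cdot>\<^sub>v x"
proof -
  obtain s0 where s0: "s0 < d" "\<forall>t<d. w $ t / x $ t \<le> w $ s0 / x $ s0"
    using ex_argmax[OF d, of "\<lambda>t. w $ t / x $ t"] by auto
  define c where "c = w $ s0 / x $ s0"
  have nn: "\<forall>t<d. c * x $ t - w $ t \<ge> 0"
  proof (intro allI impI)
    fix t assume t: "t < d"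
    have "w $ t / x $ t \<le> c" using s0 t c_def by auto
    then show "c * x $ t - w $ t \<ge> 0" using x(2) t by (simp add: divide_le_eq)
  qed
  have z0: "c * x $ s0 - w $ s0 = 0" using x(2) s0 c_def by auto
  have "(\<Sum>t<d. P $$ (s0,t) * (c * x $ t - w $ t)) = c * (P *\<^sub>v x) $ s0 - (P *\<^sub>v w) $ s0"
    using mv_sum[OF P(1) x(1) s0(1)] mv_sum[OF P(1) w(1) s0(1)]
    by (simp add: algebra_simps sum_subtractf sum_distrib_left)
  also have "\<dots> = r * (c * x $ s0 - w $ s0)" using x(3) w(2) x(1) w(1) s0
    by (simp add: algebra_simps)
  finally have "(\<Sum>t<d. P $$ (s0,t) * (c * x $ t - w $ t)) = 0" using z0 by simp
  moreover have "\<forall>t\<in>{..<d}. P $$ (s0,t) * (c * x $ t - w $ t) \<ge> 0"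
    using nn P(2) s0(1) by (simp add: less_imp_le)
  ultimately have "\<forall>t\<in>{..<d}. P $$ (s0,t) * (c * x $ t - w $ t) = 0"
    using sum_nonneg_eq_0_iff[OF finite_lessThan, where f="\<lambda>t. P $$ (s0,t) * (c * x $ t - w $ t)"] by blast
  then have "\<forall>t<d. w $ t = c * x $ t"
  proof (intro allI impI)
    fix t assume t: "t < d"
    assume h: "\<forall>t\<in>{..<d}. P $$ (s0,t) * (c * x $ t - w $ t) = 0"
    have "P $$ (s0,t) * (c * x $ t - w $ t) = 0" using h t by auto
    moreover have "P $$ (s0,t) > 0" using P(2) s0(1) t by auto
    ultimately show "w $ t = c * x $ t" by simp
  qed
  then have "w = c \<cdot>\<^sub>v x" using w(1) x(1) by (intro eq_vecI) auto
  then show ?thesis by blast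
qed

lemma realL4:
  fixes P :: "real mat"
  assumes P: "P \<in> carrier_mat d d" "\<forall>s<d. \<forall>t<d. P $$ (s,t) > 0"
    and x: "x \<in> carrier_vec d" "\<forall>s<d. x $ s > 0" "P *\<^sub>v x = r \<cdot>\<^sub>v x"
    and w: "w \<in> carrier_vec d" "\<forall>s<d. (P *\<^sub>v w) $ s \<le> r * w $ s" and d: "d > 0"
  shows "\<exists>c. w = c \<cdot>\<^sub>v x"
proof -
  obtain s0 where s0: "s0 < d" "\<forall>t<d. w $ t / x $ t \<ge> w $ s0 / x $ s0"
    using ex_argmin[OF d, of "\<lambda>t. w $ t / x $ t"] by auto
  define c where "c = w $ s0 / x $ s0"
  have nn: "\<forall>t<d. w $ t - c * x $ t \<ge> 0"
  proof (intro allI impI)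
    fix t assume t: "t < d"
    have "w $ t / x $ t \<ge> c" using s0 t c_def by auto
    then show "w $ t - c * x $ t \<ge> 0" using x(2) t by (simp add: le_divide_eq)
  qed
  have z0: "w $ s0 - c * x $ s0 = 0" using x(2) s0 c_def by auto
  have "(\<Sum>t<d. P $$ (s0,t) * (w $ t - c * x $ t)) = (P *\<^sub>v w) $ s0 - c * (P *\<^sub>v x) $ s0"
    using mv_sum[OF P(1) x(1) s0(1)] mv_sum[OF P(1) w(1) s0(1)]
    by (simp add: algebra_simps sum_subtractf sum_distrib_left)
  also have "\<dots> \<le> r * (w $ s0 - c * x $ s0)" using x(3) w(2) x(1) w(1) s0
    by (simp add: algebra_simps)
  finally have "(\<Sum>t<d. P $$ (s0,t) * (w $ t - c * x $ t)) \<le> 0" using z0 by simp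
  moreover have "\<forall>t\<in>{..<d}. P $$ (s0,t) * (w $ t - c * x $ t) \<ge> 0"
    using nn P(2) s0(1) by (simp add: less_imp_le)
  ultimately have "(\<Sum>t<d. P $$ (s0,t) * (w $ t - c * x $ t)) = 0"
    "\<forall>t\<in>{..<d}. P $$ (s0,t) * (w $ t - c * x $ t) \<ge> 0"
    by (auto intro: antisym sum_nonneg)
  then have "\<forall>t\<in>{..<d}. P $$ (s0,t) * (w $ t - c * x $ t) = 0"
    using sum_nonneg_eq_0_iff[OF finite_lessThan, where f="\<lambda>t. P $$ (s0,t) * (w $ t - c * x $ t)"] 
    by blast
  then have "\<forall>t<d. w $ t = c * x $ t"
  proof (intro allI impI)
    fix t assume t: "t < d"
    assume h: "\<forall>t\<in>{..<d}. P $$ (s0,t) * (w $ t - c * x $ t) = 0"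
    have "P $$ (s0,t) * (w $ t - c * x $ t) = 0" using h t by auto
    moreover have "P $$ (s0,t) > 0" using P(2) s0(1) t by auto
    ultimately show "w $ t = c * x $ t" by simp
  qed
  then have "w = c \<cdot>\<^sub>v x" using w(1) x(1) by (intro eq_vecI) auto
  then show ?thesis by blast
qed


lemma nz_idx:
  assumes "y \<in> carrier_vec d" "y \<noteq> 0\<^sub>v d"
  shows "\<exists>t<d. y $ t \<noteq> 0"
proof (rule ccontr)
  assume "\<not> ?thesis"
  then have "y = 0\<^sub>v d" using assms(1) by (intro eq_vecI) auto
  then show False using assms(2) by simp
qed

lemma eig_bound:
  fixes B :: "real mat"
  assumes B: "B \<in> carrier_mat d d" "\<forall>s<d. \<forall>t<d. B $$ (s,t) \<ge> 0"
   and y: "y \<in> carrier_vec d" "\<forall>s<d. y $ s > 0" "\<forall>s<d. (B *\<^sub>v y) $ s \<le> lam * y $ s"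
   and ev: "eigenvector (map_mat complex_of_real B) v e" and d: "d > 0"
  shows "norm e \<le> lam"
proof -
  have v: "v \<in> carrier_vec d" "v \<noteq> 0\<^sub>v d" "map_mat complex_of_real B *\<^sub>v v = e \<cdot>\<^sub>v v"
    using ev B(1) unfolding eigenvector_def by auto
  obtain s where s: "s<d" "\<forall>t<d. norm (v$t)/y$t \<le> norm (v$s)/y$s"
    using ex_argmax[OF d, of "\<lambda>t. norm(v$t)/y$t"] by auto
  define c where "c = norm (v$s)/y$s"
  obtain t0 where t0: "t0<d" "v$t0 \<noteq> 0" using nz_idx[OF v(1,2)] by auto
  have "norm (v$t0)/y$t0 > 0" using t0 y(2) by auto
  then have cpos: "c > 0" using s t0 c_def by force
  then have vs: "norm (v$s) > 0" using c_def y(2) s(1) by (simp add: zero_less_divide_iff)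
  have cB: "\<forall>t<d. norm (v$t) \<le> c * y$t"
  proof (intro allI impI)
    fix t assume t: "t<d"
    have "norm (v$t)/y$t \<le> c" using s t c_def by auto
    then show "norm (v$t) \<le> c * y$t" using y(2) t by (simp add: divide_le_eq)
  qed
  have "norm e * norm (v$s) = norm ((map_mat complex_of_real B *\<^sub>v v) $ s)"
    using v(3) s(1) v(1) by (simp add: norm_mult)
  also have "\<dots> = norm (\<Sum>t<d. complex_of_real (B$$(s,t)) * v$t)"
    using mv_sum[of "map_mat complex_of_real B" d v s] B v s by simp
  also have "\<dots> \<le> (\<Sum>t<d. B$$(s,t) * norm(v$t))"
    by (rule order_trans[OF norm_sum]) (simp add: norm_mult B(2) s(1))
  also have "\<dots> \<le> (\<Sum>t<d. B$$(s,t) * (c * y$t))"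
    using cB B(2) s(1) by (intro sum_mono mult_left_mono) auto
  also have "\<dots> = c * (B *\<^sub>v y)$s"
    using mv_sum[OF B(1) y(1) s(1)] by (simp add: sum_distrib_left algebra_simps)
  also have "\<dots> \<le> c * (lam * y$s)" using y(3) s(1) cpos by (simp add: mult_left_mono)
  also have "\<dots> = lam * norm (v$s)" using y(2)[rule_format, OF s(1)] by (simp add: c_def)
  finally have "norm e * norm (v $ s) \<le> lam * norm (v$s)" .
  then show ?thesis using vs by simp
qed

lemma rho_ge:
  fixes B :: "real mat"
  assumes "B \<in> carrier_mat d d" "d > 0" "eigenvector (map_mat complex_of_real B) v e"
  shows "norm e \<le> rho B"
proof -
  have "e \<in> spectrum (map_mat complex_of_real B)"
    using assms(3) by (auto simp: spectrum_def eigenvalue_def)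
  then have "norm e \<in> norm ` spectrum (map_mat complex_of_real B)" by blast
  then show ?thesis unfolding rho_def
    using spectral_radius_mem_max(2)[of "map_mat complex_of_real B" d] assms by auto
qed

lemma rho_attained:
  fixes B :: "real mat"
  assumes "B \<in> carrier_mat d d" "d > 0"
  shows "\<exists>e v. eigenvector (map_mat complex_of_real B) v e \<and> norm e = rho B"
proof -
  have "spectral_radius (map_mat complex_of_real B) \<in> norm ` spectrum (map_mat complex_of_real B)"
    by (rule spectral_radius_mem_max(1)[of _ d]) (use assms in auto)
  then show ?thesis unfolding rho_def spectrum_def eigenvalue_def by auto
qed

lemma PF_rho:
  fixes B :: "real mat"
  assumes B: "B \<in> carrier_mat d d" "\<forall>s<d. \<forall>t<d. B $$ (s,t) \<ge> 0"
   and y: "y \<in> carrier_vec d" "\<forall>s<d. y $ s > 0" "B *\<^sub>v y = mu \<cdot>\<^sub>v y" and d: "d > 0"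
  shows "rho B = mu"
proof -
  obtain e v where ev: "eigenvector (map_mat complex_of_real B) v e" "norm e = rho B"
    using rho_attained[OF B(1) d] by auto
  have "norm e \<le> mu" by (rule eig_bound[OF B y(1,2) _ ev(1) d]) (use y in auto)
  moreover
  have "map_mat complex_of_real B *\<^sub>v map_vec complex_of_real y = complex_of_real mu \<cdot>\<^sub>v map_vec complex_of_real y"
  proof (rule eq_vecI)
    fix s assume "s < dim_vec (complex_of_real mu \<cdot>\<^sub>v map_vec complex_of_real y)"
    then have s: "s < d" using y(1) by auto
    have "(map_mat complex_of_real B *\<^sub>v map_vec complex_of_real y) $ s
       = (\<Sum>t<d. complex_of_real (B$$(s,t)) * complex_of_real (y $ t))"
      using mv_sum[of "map_mat complex_of_real B" d "map_vec complex_of_real y" s] B y s by simp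
    also have "\<dots> = complex_of_real ((B *\<^sub>v y) $ s)" using mv_sum[OF B(1) y(1) s] by simp
    also have "\<dots> = complex_of_real mu * complex_of_real (y $ s)" using y(3) y(1) s by simp
    finally show "(map_mat complex_of_real B *\<^sub>v map_vec complex_of_real y) $ s =
      (complex_of_real mu \<cdot>\<^sub>v map_vec complex_of_real y) $ s" using y(1) s by simp
  qed (use B y in auto)
  then have "eigenvector (map_mat complex_of_real B) (map_vec complex_of_real y) (complex_of_real mu)"
    unfolding eigenvector_def using B y d
    by (auto simp: vec_eq_iff) (metis (no_types) y(2) d less_irrefl)
  from rho_ge[OF B(1) d this] have "\<bar>mu\<bar> \<le> rho B" by simp
  ultimately show ?thesis using ev(2) by linarith
qed

lemma pos_mult:
  fixes P :: "real mat"
  assumes P: "P \<in> carrier_mat d d" "\<forall>s<d. \<forall>t<d. P $$ (s,t) > 0"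
    and y: "y \<in> carrier_vec d" "\<forall>s<d. y $ s \<ge> 0" "y \<noteq> 0\<^sub>v d" and s: "s < d"
  shows "(P *\<^sub>v y) $ s > 0"
proof -
  obtain t where t: "t < d" "y $ t \<noteq> 0" using nz_idx[OF y(1,3)] by auto
  have "0 < P $$ (s,t) * y $ t" using P(2) y(2) t s by (simp add: less_le)
  also have "\<dots> \<le> (\<Sum>t<d. P $$ (s,t) * y $ t)"
    by (rule member_le_sum) (use t P(2) y(2) s in \<open>auto simp: less_imp_le\<close>)
  finally show ?thesis using mv_sum[OF P(1) y(1) s] by simp
qed


definition nonneg_mat :: "nat \<Rightarrow> real mat \<Rightarrow> bool" where
  "nonneg_mat d B \<longleftrightarrow> B \<in> carrier_mat d d \<and> (\<forall>s<d. \<forall>t<d. B $$ (s,t) \<ge> 0)"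

lemma nonneg_mult: "nonneg_mat d B \<Longrightarrow> nonneg_mat d C \<Longrightarrow> nonneg_mat d (B * C)"
  unfolding nonneg_mat_def
  by (auto simp: scalar_prod_def intro!: sum_nonneg)

lemma nonneg_one: "nonneg_mat d (1\<^sub>m d)"
  unfolding nonneg_mat_def by auto

lemma nonneg_pow: "nonneg_mat d B \<Longrightarrow> nonneg_mat d (B ^\<^sub>m m)"
proof (induction m)
  case 0 then show ?case using nonneg_one[of d] by (auto simp: nonneg_mat_def)
next
  case (Suc m) then show ?case using nonneg_mult by simp
qed

lemma nonneg_fl:
  assumes "\<forall>i\<in>set xs. nonneg_mat d (A i)"
  shows "nonneg_mat d (foldr (\<lambda>i M. (A i ^\<^sub>m n i) * M) xs (1\<^sub>m d))"
  using assms by (induction xs) (auto intro: nonneg_mult nonneg_pow nonneg_one)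

lemma mono_mv:
  assumes "nonneg_mat d B" "v \<in> carrier_vec d" "w \<in> carrier_vec d" "\<forall>t<d. v$t \<le> w$t" "s<d"
  shows "(B *\<^sub>v v) $ s \<le> (B *\<^sub>v w) $ s"
proof -
  have Bc: "B \<in> carrier_mat d d" using assms(1) by (simp add: nonneg_mat_def)
  show ?thesis unfolding mv_sum[OF Bc assms(2,5)] mv_sum[OF Bc assms(3,5)]
    using assms unfolding nonneg_mat_def by (auto intro!: sum_mono mult_left_mono)
qed

definition subinv :: "nat \<Rightarrow> real mat \<Rightarrow> real \<Rightarrow> real vec \<Rightarrow> bool" where
  "subinv d B c u \<longleftrightarrow> (\<forall>s<d. (B *\<^sub>v u) $ s \<le> c * u $ s)"

lemma subinv_mult:
  assumes B: "nonneg_mat d B" and C: "nonneg_mat d C" and u: "u \<in> carrier_vec d"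
    and "subinv d B b u" "subinv d C c u" "c \<ge> 0"
  shows "subinv d (B * C) (b * c) u"
  unfolding subinv_def
proof (intro allI impI)
  fix s assume s: "s < d"
  have Bc: "B \<in> carrier_mat d d" "C \<in> carrier_mat d d" using B C by (auto simp: nonneg_mat_def)
  have "((B * C) *\<^sub>v u) $ s = (B *\<^sub>v (C *\<^sub>v u)) $ s" using Bc u by simp
  also have "\<dots> \<le> (B *\<^sub>v (c \<cdot>\<^sub>v u)) $ s"
    by (rule mono_mv[OF B _ _ _ s]) (use Bc u assms(5) in \<open>auto simp: subinv_def\<close>)
  also have "\<dots> = c * (B *\<^sub>v u) $ s" using Bc u s by (simp add: mult_mat_vec)
  also have "\<dots> \<le> c * (b * u $ s)" using assms(4,6) s by (simp add: subinv_def mult_left_mono)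
  also have "c * (b * u $ s) = b * c * u $ s" by simp
  finally show "((B * C) *\<^sub>v u) $ s \<le> b * c * u $ s" .
qed

lemma subinv_one: "u \<in> carrier_vec d \<Longrightarrow> subinv d (1\<^sub>m d) 1 u"
  unfolding subinv_def by simp

lemma subinv_pow:
  assumes "nonneg_mat d B" "u \<in> carrier_vec d" "subinv d B b u" "b \<ge> 0"
  shows "subinv d (B ^\<^sub>m m) (b ^ m) u"
proof (induction m)
  case 0
  have "dim_row B = d" using assms(1) unfolding nonneg_mat_def carrier_mat_def by auto
  then show ?case using subinv_one[OF assms(2)] by simp
next
  case (Suc m)
  have "subinv d (B ^\<^sub>m m * B) (b ^ m * b) u"
    by (rule subinv_mult[OF nonneg_pow[OF assms(1)] assms(1) assms(2) Suc assms(3,4)])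
  then show ?case by (metis pow_mat.simps(2) power_Suc2)
qed

lemma subinv_fl:
  assumes "\<forall>i\<in>set xs. nonneg_mat d (A i) \<and> subinv d (A i) (lam i) u \<and> lam i \<ge> 0"
    and u: "u \<in> carrier_vec d"
  shows "subinv d (foldr (\<lambda>i M. (A i ^\<^sub>m n i) * M) xs (1\<^sub>m d)) (foldr (\<lambda>i c. lam i ^ n i * c) xs 1) u"
  using assms(1)
proof (induction xs)
  case Nil then show ?case using subinv_one[OF u] by simp
next
  case (Cons i xs)
  have c0: "foldr (\<lambda>i c. lam i ^ n i * c) xs 1 \<ge> 0" using Cons.prems
    by (induction xs) auto
  have Ai: "nonneg_mat d (A i)" "subinv d (A i) (lam i) u" "lam i \<ge> 0" using Cons.prems by auto
  have IH: "subinv d (foldr (\<lambda>i M. (A i ^\<^sub>m n i) * M) xs (1\<^sub>m d)) (foldr (\<lambda>i c. lam i ^ n i * c) xs 1) u"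
    using Cons.IH Cons.prems by auto
  have nf: "nonneg_mat d (foldr (\<lambda>i M. (A i ^\<^sub>m n i) * M) xs (1\<^sub>m d))"
    by (rule nonneg_fl) (use Cons.prems in auto)
  have "subinv d (A i ^\<^sub>m n i * foldr (\<lambda>i M. (A i ^\<^sub>m n i) * M) xs (1\<^sub>m d))
     (lam i ^ n i * foldr (\<lambda>i c. lam i ^ n i * c) xs 1) u"
    by (rule subinv_mult[OF nonneg_pow[OF Ai(1)] nf u subinv_pow[OF Ai(1) u Ai(2,3)] IH c0])
  then show ?case by simp
qed

definition eigv :: "real mat \<Rightarrow> real \<Rightarrow> real vec \<Rightarrow> bool" where
  "eigv B c u \<longleftrightarrow> B *\<^sub>v u = c \<cdot>\<^sub>v u"

lemma eigv_mult:
  assumes "B \<in> carrier_mat d d" "C \<in> carrier_mat d d" "u \<in> carrier_vec d" "eigv B b u" "eigv C c u"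
  shows "eigv (B * C) (b * c) u"
  using assms unfolding eigv_def by (simp add: mult_mat_vec smult_smult_assoc mult.commute)

lemma eigv_pow:
  assumes "B \<in> carrier_mat d d" "u \<in> carrier_vec d" "eigv B b u"
  shows "eigv (B ^\<^sub>m m) (b ^ m) u"
proof (induction m)
  case 0 then show ?case using assms by (simp add: eigv_def)
next
  case (Suc m)
  have "eigv (B ^\<^sub>m m * B) (b ^ m * b) u"
    by (rule eigv_mult[OF _ assms(1) assms(2) Suc assms(3)]) (use assms in auto)
  then show ?case by (metis pow_mat.simps(2) power_Suc2)
qed

lemma eigv_fl:
  assumes "\<forall>i\<in>set xs. A i \<in> carrier_mat d d \<and> eigv (A i) (mu i) u"
    and u: "u \<in> carrier_vec d"
  shows "eigv (foldr (\<lambda>i M. (A i ^\<^sub>m n i) * M) xs (1\<^sub>m d)) (foldr (\<lambda>i c. mu i ^ n i * c) xs 1) u"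
  using assms(1)
proof (induction xs)
  case Nil then show ?case using u by (simp add: eigv_def)
next
  case (Cons i xs)
  have car: "foldr (\<lambda>i M. (A i ^\<^sub>m n i) * M) xs (1\<^sub>m d) \<in> carrier_mat d d"
    using Cons.prems by (induction xs) auto
  show ?case
    using eigv_mult[OF _ car u eigv_pow Cons.IH] Cons.prems u by auto
qed

lemma foldr_prod: "foldr (\<lambda>i c. f i * c) [0..<k] (1::real) = (\<Prod>i<k. f i)"
proof -
  have "foldr (\<lambda>i c. f i * c) xs 1 = prod_list (map f xs)" for xs
    by (induction xs) auto
  moreover have "prod_list (map f [0..<k]) = (\<Prod>i<k. f i)"
    by (induction k) (auto simp: lessThan_Suc mult.commute)
  ultimately show ?thesis by simp
qed


lemma msum_carrier: "msum d k A F \<in> carrier_mat d d"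
  by (simp add: msum_def)

lemma msum_mv:
  assumes M: "\<forall>n. mpow d k A n \<in> carrier_mat d d" and F: "finite F"
    and v: "v \<in> carrier_vec d" and s: "s < d"
  shows "(msum d k A F *\<^sub>v v) $ s = (\<Sum>n\<in>F. (mpow d k A n *\<^sub>v v) $ s)"
proof -
  have "(msum d k A F *\<^sub>v v) $ s = (\<Sum>t<d. (\<Sum>n\<in>F. mpow d k A n $$ (s,t)) * v $ t)"
    using mv_sum[OF msum_carrier v s] s by (simp add: msum_def)
  also have "\<dots> = (\<Sum>n\<in>F. \<Sum>t<d. mpow d k A n $$ (s,t) * v $ t)"
    by (simp add: sum_distrib_right sum.swap[of _ "{..<d}"])
  also have "\<dots> = (\<Sum>n\<in>F. (mpow d k A n *\<^sub>v v) $ s)"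
    using mv_sum[OF _ v s] M by simp
  finally show ?thesis .
qed

lemma comm_pow:
  assumes B: "B \<in> carrier_mat d d" and C: "C \<in> carrier_mat d d" and BC: "C * B = B * C"
  shows "C * B ^\<^sub>m m = B ^\<^sub>m m * C"
proof (induction m)
  case 0 then show ?case using B C by simp
next
  case (Suc m)
  have P: "B ^\<^sub>m m \<in> carrier_mat d d" using B by simp
  have "C * B ^\<^sub>m Suc m = (C * B ^\<^sub>m m) * B" using assoc_mult_mat[OF C P B] by simp
  also have "\<dots> = B ^\<^sub>m m * (C * B)" using Suc assoc_mult_mat[OF P C B] by simp
  also have "\<dots> = (B ^\<^sub>m m * B) * C" using BC assoc_mult_mat[OF P B C] by simp
  finally show ?case by simp
qed

lemma comm_fl:
  assumes "\<forall>i\<in>set xs. A i \<in> carrier_mat d d \<and> C * A i = A i * C" and C: "C \<in> carrier_mat d d"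
  shows "C * foldr (\<lambda>i M. (A i ^\<^sub>m n i) * M) xs (1\<^sub>m d) = foldr (\<lambda>i M. (A i ^\<^sub>m n i) * M) xs (1\<^sub>m d) * C"
  using assms(1)
proof (induction xs)
  case Nil then show ?case using C by simp
next
  case (Cons i xs)
  define Q where "Q = foldr (\<lambda>i M. (A i ^\<^sub>m n i) * M) xs (1\<^sub>m d)"
  have Q: "Q \<in> carrier_mat d d" unfolding Q_def using Cons.prems by (induction xs) auto
  have Ai: "A i \<in> carrier_mat d d" "C * A i = A i * C" using Cons.prems by auto
  have P: "A i ^\<^sub>m n i \<in> carrier_mat d d" using Ai by simp
  have IH: "C * Q = Q * C" unfolding Q_def using Cons.IH Cons.prems by auto
  have "C * (A i ^\<^sub>m n i * Q) = (C * A i ^\<^sub>m n i) * Q" using P Q C by (simp add: assoc_mult_mat)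
  also have "\<dots> = A i ^\<^sub>m n i * (C * Q)" using P Q C comm_pow[OF Ai(1) C Ai(2)] by (simp add: assoc_mult_mat)
  also have "\<dots> = (A i ^\<^sub>m n i * Q) * C" using P Q C IH by (simp add: assoc_mult_mat)
  finally show ?case unfolding Q_def by simp
qed

lemma pos_entry:
  fixes B :: "real mat"
  assumes B: "nonneg_mat d B" "B \<noteq> 0\<^sub>m d d"
    and x: "x \<in> carrier_vec d" "\<forall>s<d. x $ s > 0"
  shows "\<exists>s<d. (B *\<^sub>v x) $ s > 0"
proof -
  have Bc: "B \<in> carrier_mat d d" using B(1) by (simp add: nonneg_mat_def)
  obtain s t where st: "s < d" "t < d" "B $$ (s,t) \<noteq> 0"
  proof (rule ccontr)
    assume "\<not> thesis"
    then have "\<forall>s<d. \<forall>t<d. B $$ (s,t) = 0" using that by blast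
    then have "B = 0\<^sub>m d d" using Bc by (intro eq_matI) auto
    then show False using B(2) by simp
  qed
  have "0 < B $$ (s,t) * x $ t" using B(1) st x(2) by (simp add: nonneg_mat_def less_le)
  also have "\<dots> \<le> (\<Sum>t<d. B $$ (s,t) * x $ t)"
    by (rule member_le_sum) (use st B(1) x(2) in \<open>auto simp: nonneg_mat_def less_imp_le\<close>)
  finally show ?thesis using mv_sum[OF Bc x(1) st(1)] st(1) by auto
qed

lemma norm1_smult: "x \<in> carrier_vec d \<Longrightarrow> norm1 (c \<cdot>\<^sub>v x) = \<bar>c\<bar> * norm1 x"
  unfolding norm1_def by (simp add: abs_mult sum_distrib_left)

lemma re_im_part:
  fixes B :: "real mat"
  assumes B: "B \<in> carrier_mat d d" and z: "z \<in> carrier_vec d"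
    and ev: "map_mat complex_of_real B *\<^sub>v z = complex_of_real c \<cdot>\<^sub>v z"
  shows "B *\<^sub>v map_vec Re z = c \<cdot>\<^sub>v map_vec Re z" "B *\<^sub>v map_vec Im z = c \<cdot>\<^sub>v map_vec Im z"
proof -
  have e: "(\<Sum>t<d. complex_of_real (B $$ (s,t)) * z $ t) = complex_of_real c * z $ s" if s: "s < d" for s
  proof -
    have "(map_mat complex_of_real B *\<^sub>v z) $ s = (\<Sum>t<d. complex_of_real (B $$ (s,t)) * z $ t)"
      using mv_sum[of "map_mat complex_of_real B" d z s] B z s by simp
    then show ?thesis using ev z s by simp
  qed
  show "B *\<^sub>v map_vec Re z = c \<cdot>\<^sub>v map_vec Re z"
  proof (rule eq_vecI)
    fix s assume "s < dim_vec (c \<cdot>\<^sub>v map_vec Re z)"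
    then have s: "s < d" using z by simp
    have "(B *\<^sub>v map_vec Re z) $ s = (\<Sum>t<d. B $$ (s,t) * Re (z $ t))"
      using mv_sum[OF B _ s, of "map_vec Re z"] z by simp
    also have "\<dots> = Re (\<Sum>t<d. complex_of_real (B $$ (s,t)) * z $ t)" by (simp add: Re_sum)
    also have "\<dots> = c * Re (z $ s)" using e[OF s] by simp
    finally show "(B *\<^sub>v map_vec Re z) $ s = (c \<cdot>\<^sub>v map_vec Re z) $ s" using z s by simp
  qed (use B z in auto)
  show "B *\<^sub>v map_vec Im z = c \<cdot>\<^sub>v map_vec Im z"
  proof (rule eq_vecI)
    fix s assume "s < dim_vec (c \<cdot>\<^sub>v map_vec Im z)"
    then have s: "s < d" using z by simp
    have "(B *\<^sub>v map_vec Im z) $ s = (\<Sum>t<d. B $$ (s,t) * Im (z $ t))"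
      using mv_sum[OF B _ s, of "map_vec Im z"] z by simp
    also have "\<dots> = Im (\<Sum>t<d. complex_of_real (B $$ (s,t)) * z $ t)" by (simp add: Im_sum)
    also have "\<dots> = c * Im (z $ s)" using e[OF s] by simp
    finally show "(B *\<^sub>v map_vec Im z) $ s = (c \<cdot>\<^sub>v map_vec Im z) $ s" using z s by simp
  qed (use B z in auto)
qed

theorem proposition3p1:
  fixes d k :: nat and A :: "nat \<Rightarrow> real mat" and F :: "(nat \<Rightarrow> nat) set" and x :: "real vec"
  assumes carr: "\<forall>i<k. A i \<in> carrier_mat d d"
    and nonneg: "\<forall>i<k. \<forall>s<d. \<forall>t<d. A i $$ (s,t) \<ge> 0"
    and nonzero: "\<forall>i<k. A i \<noteq> 0\<^sub>m d d"
    and comm: "\<forall>i<k. \<forall>j<k. A i * A j = A j * A i"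
    and irr: "irreducible_family d k A"
    and F: "finite F" "F \<subseteq> nvecs k"
    and AF_pos: "\<forall>s<d. \<forall>t<d. msum d k A F $$ (s,t) > 0"
    and x: "unimodular_PF_eigenvector (msum d k A F) x"
  shows
    "(x \<in> carrier_vec d \<and> (\<forall>s<d. x $ s \<ge> 0) \<and> norm1 x = 1 \<and>
        (\<forall>i<k. \<exists>\<mu>. eigenvector (A i) x \<mu>) \<and>
        (\<forall>y. y \<in> carrier_vec d \<and> (\<forall>s<d. y $ s \<ge> 0) \<and> norm1 y = 1 \<and>
             (\<forall>i<k. \<exists>\<mu>. eigenvector (A i) y \<mu>) \<longrightarrow> y = x))
     \<and> (\<forall>i<k. A i *\<^sub>v x = rho (A i) \<cdot>\<^sub>v x \<and> rho (A i) > 0)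
     \<and> (\<forall>z. z \<in> carrier_vec d \<and>
            (\<forall>i<k. map_mat complex_of_real (A i) *\<^sub>v z = complex_of_real (rho (A i)) \<cdot>\<^sub>v z)
            \<longrightarrow> (\<exists>c::complex. z = c \<cdot>\<^sub>v map_vec complex_of_real x))
     \<and> (\<forall>y (lam::nat \<Rightarrow> real). y \<in> carrier_vec d \<and> (\<forall>s<d. y $ s \<ge> 0) \<and> y \<noteq> 0\<^sub>v d \<and>
            (\<forall>i<k. lam i \<ge> 0) \<and> (\<forall>i<k. \<forall>s<d. (A i *\<^sub>v y) $ s \<le> lam i * y $ s) \<longrightarrow>
            (\<forall>s<d. y $ s > 0) \<and> (\<forall>i<k. lam i \<ge> rho (A i)) \<and>
            ((\<forall>i<k. lam i = rho (A i)) \<and> norm1 y = 1 \<longrightarrow> y = x))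
     \<and> (\<forall>n\<in>nvecs k. rho (mpow d k A n) = (\<Prod>i<k. rho (A i) ^ n i) \<and>
            (\<Prod>i<k. rho (A i) ^ n i) > 0)"
proof -
  define AF where "AF = msum d k A F"
  define r where "r = rho AF"
  define M where "M = mpow d k A"
  have AFc: "AF \<in> carrier_mat d d" by (simp add: AF_def msum_def)
  have dimAF: "dim_row AF = d" using AFc by simp
  have xc: "x \<in> carrier_vec d" and xpos0: "\<forall>s<dim_vec x. x $ s > 0"
    and AFx: "AF *\<^sub>v x = r \<cdot>\<^sub>v x" and nx: "norm1 x = 1"
    using x unfolding unimodular_PF_eigenvector_def AF_def[symmetric] r_def[symmetric] dimAF by auto
  have xpos: "\<forall>s<d. x $ s > 0" using xpos0 xc by simp
  have d: "d > 0"
  proof (rule ccontr)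
    assume "\<not> d > 0"
    then have "d = 0" by simp
    then have "norm1 x = 0" using xc unfolding norm1_def by simp
    then show False using nx by simp
  qed
  have x0: "x \<noteq> 0\<^sub>v d" using xpos d by (metis index_zero_vec(1) less_irrefl)
  have xnn: "\<forall>s<d. x $ s \<ge> 0" using xpos by (simp add: less_imp_le)
  have Anon: "\<forall>i<k. nonneg_mat d (A i)" using carr nonneg by (simp add: nonneg_mat_def)
  have Mnon: "nonneg_mat d (M n)" for n
    unfolding M_def mpow_def by (rule nonneg_fl) (use Anon in auto)
  have Mc: "\<forall>n. mpow d k A n \<in> carrier_mat d d" using Mnon by (simp add: nonneg_mat_def M_def)
  have AFnon: "nonneg_mat d AF" using AFc AF_pos by (simp add: nonneg_mat_def AF_def less_imp_le)
  have AFp: "\<forall>s<d. \<forall>t<d. AF $$ (s,t) > 0" using AF_pos by (simp add: AF_def)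
  have AFmv: "(AF *\<^sub>v v) $ s = (\<Sum>n\<in>F. (M n *\<^sub>v v) $ s)" if "v \<in> carrier_vec d" "s < d" for v s
    unfolding AF_def M_def by (rule msum_mv[OF Mc F(1) that])
  have commM: "A i * M n = M n * A i" if i: "i < k" for i n
    unfolding M_def mpow_def by (rule comm_fl) (use comm carr i in auto)
  have Aix: "\<exists>c. A i *\<^sub>v x = c \<cdot>\<^sub>v x" if i: "i < k" for i
  proof -
    have Ai: "A i \<in> carrier_mat d d" using carr i by auto
    have wc: "A i *\<^sub>v x \<in> carrier_vec d" using Ai xc by simp
    have "AF *\<^sub>v (A i *\<^sub>v x) = r \<cdot>\<^sub>v (A i *\<^sub>v x)"
    proof (rule eq_vecI)
      fix s assume "s < dim_vec (r \<cdot>\<^sub>v (A i *\<^sub>v x))"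
      then have s: "s < d" using Ai by simp
      have "(AF *\<^sub>v (A i *\<^sub>v x)) $ s = (\<Sum>n\<in>F. (M n *\<^sub>v (A i *\<^sub>v x)) $ s)" by (rule AFmv[OF wc s])
      also have "\<dots> = (\<Sum>n\<in>F. (A i *\<^sub>v (M n *\<^sub>v x)) $ s)"
      proof (rule sum.cong[OF refl])
        fix n
        have Mn: "M n \<in> carrier_mat d d" using Mnon by (simp add: nonneg_mat_def)
        have "M n *\<^sub>v (A i *\<^sub>v x) = (M n * A i) *\<^sub>v x" using Mn Ai xc by simp
        also have "\<dots> = (A i * M n) *\<^sub>v x" using commM[OF i] by simp
        also have "\<dots> = A i *\<^sub>v (M n *\<^sub>v x)" using Mn Ai xc by simp
        finally show "(M n *\<^sub>v (A i *\<^sub>v x)) $ s = (A i *\<^sub>v (M n *\<^sub>v x)) $ s" by simp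
      qed
      also have "\<dots> = (\<Sum>n\<in>F. \<Sum>t<d. A i $$ (s,t) * (M n *\<^sub>v x) $ t)"
      proof (rule sum.cong[OF refl])
        fix n have "M n \<in> carrier_mat d d" using Mnon by (simp add: nonneg_mat_def)
        then show "(A i *\<^sub>v (M n *\<^sub>v x)) $ s = (\<Sum>t<d. A i $$ (s,t) * (M n *\<^sub>v x) $ t)"
          using mv_sum[OF Ai _ s] xc by simp
      qed
      also have "\<dots> = (\<Sum>t<d. A i $$ (s,t) * (\<Sum>n\<in>F. (M n *\<^sub>v x) $ t))"
        by (simp add: sum_distrib_left sum.swap[of _ F])
      also have "\<dots> = (\<Sum>t<d. A i $$ (s,t) * (r * x $ t))"
        using AFmv[OF xc] AFx xc by (intro sum.cong) auto
      also have "\<dots> = r * (A i *\<^sub>v x) $ s"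
        using mv_sum[OF Ai xc s] by (simp add: sum_distrib_left algebra_simps)
      finally show "(AF *\<^sub>v (A i *\<^sub>v x)) $ s = (r \<cdot>\<^sub>v (A i *\<^sub>v x)) $ s" using s Ai by simp
    qed (use AFc Ai in auto)
    then show ?thesis using realL3[OF AFc AFp xc xpos AFx wc _ d] by blast
  qed
  have "\<forall>i. \<exists>c. i < k \<longrightarrow> A i *\<^sub>v x = c \<cdot>\<^sub>v x" using Aix by blast
  then obtain mu where mu: "\<forall>i<k. A i *\<^sub>v x = mu i \<cdot>\<^sub>v x" by metis
  have rhoA: "rho (A i) = mu i" if i: "i < k" for i
    by (rule PF_rho[OF _ _ xc xpos _ d]) (use carr nonneg mu i in auto)
  have mupos: "mu i > 0" if i: "i < k" for i
  proof -
    obtain s where s: "s < d" "(A i *\<^sub>v x) $ s > 0"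
      using pos_entry[OF _ _ xc xpos, of "A i"] Anon nonzero i by auto
    then have "mu i * x $ s > 0" using mu i xc by simp
    moreover have "x $ s > 0" using xpos s(1) by auto
    ultimately show ?thesis by (simp add: zero_less_mult_iff)
  qed
  have Ax: "\<forall>i<k. A i *\<^sub>v x = rho (A i) \<cdot>\<^sub>v x" using mu rhoA by simp
  have rhopos: "\<forall>i<k. rho (A i) > 0" using mupos rhoA by simp
  have Meig: "M n *\<^sub>v u = (\<Prod>i<k. nu i ^ n i) \<cdot>\<^sub>v u"
    if "u \<in> carrier_vec d" "\<forall>i<k. A i *\<^sub>v u = nu i \<cdot>\<^sub>v u" for u nu n
  proof -
    have "eigv (M n) (foldr (\<lambda>i c. nu i ^ n i * c) [0..<k] 1) u"
      unfolding M_def mpow_def by (rule eigv_fl) (use that carr in \<open>auto simp: eigv_def\<close>)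
    then show ?thesis unfolding eigv_def foldr_prod .
  qed
  have AFeig: "AF *\<^sub>v u = (\<Sum>n\<in>F. \<Prod>i<k. nu i ^ n i) \<cdot>\<^sub>v u"
    if u: "u \<in> carrier_vec d" "\<forall>i<k. A i *\<^sub>v u = nu i \<cdot>\<^sub>v u" for u nu
  proof (rule eq_vecI)
    fix s assume "s < dim_vec ((\<Sum>n\<in>F. \<Prod>i<k. nu i ^ n i) \<cdot>\<^sub>v u)"
    then have s: "s < d" using u by simp
    show "(AF *\<^sub>v u) $ s = ((\<Sum>n\<in>F. \<Prod>i<k. nu i ^ n i) \<cdot>\<^sub>v u) $ s"
      using AFmv[OF u(1) s] Meig[OF u] u s by (simp add: sum_distrib_right)
  qed (use AFc u in auto)
  define Lam where "Lam = (\<Sum>n\<in>F. \<Prod>i<k. rho (A i) ^ n i)"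
  have "AF *\<^sub>v x = Lam \<cdot>\<^sub>v x" unfolding Lam_def by (rule AFeig[OF xc Ax])
  then have "r \<cdot>\<^sub>v x = Lam \<cdot>\<^sub>v x" using AFx by simp
  then have "r * x $ 0 = Lam * x $ 0" using xc d by (metis index_smult_vec(1) carrier_vecD)
  moreover have "x $ 0 > 0" using xpos d by blast
  ultimately have rLam: "r = Lam" by simp
  have AFrho: "AF *\<^sub>v u = r \<cdot>\<^sub>v u" if "u \<in> carrier_vec d" "\<forall>i<k. A i *\<^sub>v u = rho (A i) \<cdot>\<^sub>v u" for u
    using AFeig[OF that] rLam Lam_def by simp
  have unique: "y = x" if y: "y \<in> carrier_vec d" "\<forall>s<d. y $ s > 0" "norm1 y = 1" "\<exists>c. y = c \<cdot>\<^sub>v x" for y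
  proof -
    obtain c where c: "y = c \<cdot>\<^sub>v x" using y(4) by auto
    have "y $ 0 = c * x $ 0" using c xc d by simp
    then have "c > 0" using y(2) xpos d by (metis zero_less_mult_iff not_less_iff_gr_or_eq less_asym)
    moreover have "norm1 y = \<bar>c\<bar>" using c norm1_smult[OF xc] nx by simp
    ultimately have "c = 1" using y(3) by simp
    then show ?thesis using c xc by simp
  qed
  have ypos: "\<forall>s<d. y $ s > 0"
    if y: "y \<in> carrier_vec d" "\<forall>s<d. y $ s \<ge> 0" "y \<noteq> 0\<^sub>v d" "\<forall>s<d. (AF *\<^sub>v y) $ s \<le> L * y $ s" "L \<ge> 0"
    for y L
  proof (intro allI impI)
    fix s assume s: "s < d"
    have "0 < (AF *\<^sub>v y) $ s" by (rule pos_mult[OF AFc AFp y(1-3) s])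
    then have "0 < L * y $ s" using y(4) s by (meson less_le_trans)
    then show "y $ s > 0" using y(2) s y(5) by (simp add: zero_less_mult_iff)
  qed
  have P1a: "\<forall>i<k. \<exists>\<mu>. eigenvector (A i) x \<mu>"
  proof (intro allI impI)
    fix i assume i: "i < k"
    have "A i \<in> carrier_mat d d" using carr i by auto
    then show "\<exists>\<mu>. eigenvector (A i) x \<mu>"
      using Ax i xc x0 unfolding eigenvector_def by auto
  qed
  have P1b: "\<forall>y. y \<in> carrier_vec d \<and> (\<forall>s<d. y $ s \<ge> 0) \<and> norm1 y = 1 \<and>
             (\<forall>i<k. \<exists>\<mu>. eigenvector (A i) y \<mu>) \<longrightarrow> y = x"
  proof (intro allI impI)
    fix y assume yh: "y \<in> carrier_vec d \<and> (\<forall>s<d. y $ s \<ge> 0) \<and> norm1 y = 1 \<and>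
             (\<forall>i<k. \<exists>\<mu>. eigenvector (A i) y \<mu>)"
    then have yc: "y \<in> carrier_vec d" and ynn: "\<forall>s<d. y $ s \<ge> 0" and ny: "norm1 y = 1" by auto
    have y0: "y \<noteq> 0\<^sub>v d" using ny unfolding norm1_def by auto
    have "\<forall>i. \<exists>\<mu>. i < k \<longrightarrow> A i *\<^sub>v y = \<mu> \<cdot>\<^sub>v y" using yh carr unfolding eigenvector_def by blast
    then obtain nu where nu: "\<forall>i<k. A i *\<^sub>v y = nu i \<cdot>\<^sub>v y" by metis
    define L where "L = (\<Sum>n\<in>F. \<Prod>i<k. nu i ^ n i)"
    have AFy: "AF *\<^sub>v y = L \<cdot>\<^sub>v y" unfolding L_def by (rule AFeig[OF yc nu])
    obtain s where s: "s < d" "y $ s \<noteq> 0" using nz_idx[OF yc y0] by auto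
    have "0 < (AF *\<^sub>v y) $ s" by (rule pos_mult[OF AFc AFp yc ynn y0 s(1)])
    then have "0 < L * y $ s" using AFy yc s by simp
    moreover have "y $ s \<ge> 0" using ynn s(1) by blast
    ultimately have L0: "L \<ge> 0" by (auto simp: zero_less_mult_iff)
    have yp: "\<forall>s<d. y $ s > 0" by (rule ypos[OF yc ynn y0 _ L0]) (use AFy yc in auto)
    have "rho AF = L" by (rule PF_rho[OF AFc _ yc yp AFy d]) (use AFnon in \<open>simp add: nonneg_mat_def\<close>)
    then have "AF *\<^sub>v y = r \<cdot>\<^sub>v y" using AFy r_def by simp
    then show "y = x" using unique[OF yc yp ny] realL3[OF AFc AFp xc xpos AFx yc _ d] by blast
  qed
  have P1: "(x \<in> carrier_vec d \<and> (\<forall>s<d. x $ s \<ge> 0) \<and> norm1 x = 1 \<and>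
        (\<forall>i<k. \<exists>\<mu>. eigenvector (A i) x \<mu>) \<and>
        (\<forall>y. y \<in> carrier_vec d \<and> (\<forall>s<d. y $ s \<ge> 0) \<and> norm1 y = 1 \<and>
             (\<forall>i<k. \<exists>\<mu>. eigenvector (A i) y \<mu>) \<longrightarrow> y = x))"
    using xc xnn nx P1a P1b by blast
  have P2: "\<forall>i<k. A i *\<^sub>v x = rho (A i) \<cdot>\<^sub>v x \<and> rho (A i) > 0" using Ax rhopos by auto
  have P3: "\<forall>z. z \<in> carrier_vec d \<and>
            (\<forall>i<k. map_mat complex_of_real (A i) *\<^sub>v z = complex_of_real (rho (A i)) \<cdot>\<^sub>v z)
            \<longrightarrow> (\<exists>c::complex. z = c \<cdot>\<^sub>v map_vec complex_of_real x)"
  proof (intro allI impI)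
    fix z :: "complex vec"
    assume zh: "z \<in> carrier_vec d \<and>
            (\<forall>i<k. map_mat complex_of_real (A i) *\<^sub>v z = complex_of_real (rho (A i)) \<cdot>\<^sub>v z)"
    then have zc: "z \<in> carrier_vec d" by auto
    have re: "\<forall>i<k. A i *\<^sub>v map_vec Re z = rho (A i) \<cdot>\<^sub>v map_vec Re z"
      and im: "\<forall>i<k. A i *\<^sub>v map_vec Im z = rho (A i) \<cdot>\<^sub>v map_vec Im z"
      using re_im_part[OF _ zc] zh carr by auto
    have rc: "map_vec Re z \<in> carrier_vec d" "map_vec Im z \<in> carrier_vec d" using zc by auto
    obtain a where a: "map_vec Re z = a \<cdot>\<^sub>v x"
      using realL3[OF AFc AFp xc xpos AFx rc(1) AFrho[OF rc(1) re] d] by blast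
    obtain b where b: "map_vec Im z = b \<cdot>\<^sub>v x"
      using realL3[OF AFc AFp xc xpos AFx rc(2) AFrho[OF rc(2) im] d] by blast
    have "z = Complex a b \<cdot>\<^sub>v map_vec complex_of_real x"
    proof (rule eq_vecI)
      fix s assume "s < dim_vec (Complex a b \<cdot>\<^sub>v map_vec complex_of_real x)"
      then have s: "s < d" using xc by simp
      have "Re (z $ s) = a * x $ s" using arg_cong[OF a, of "\<lambda>v. v $ s"] zc xc s by simp
      moreover have "Im (z $ s) = b * x $ s" using arg_cong[OF b, of "\<lambda>v. v $ s"] zc xc s by simp
      ultimately show "z $ s = (Complex a b \<cdot>\<^sub>v map_vec complex_of_real x) $ s"
        using xc s by (simp add: complex_eq_iff)
    qed (use zc xc in auto)
    then show "\<exists>c::complex. z = c \<cdot>\<^sub>v map_vec complex_of_real x" by blast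
  qed
  have P4: "\<forall>y (lam::nat \<Rightarrow> real). y \<in> carrier_vec d \<and> (\<forall>s<d. y $ s \<ge> 0) \<and> y \<noteq> 0\<^sub>v d \<and>
            (\<forall>i<k. lam i \<ge> 0) \<and> (\<forall>i<k. \<forall>s<d. (A i *\<^sub>v y) $ s \<le> lam i * y $ s) \<longrightarrow>
            (\<forall>s<d. y $ s > 0) \<and> (\<forall>i<k. lam i \<ge> rho (A i)) \<and>
            ((\<forall>i<k. lam i = rho (A i)) \<and> norm1 y = 1 \<longrightarrow> y = x)"
  proof (intro allI impI)
    fix y and lam :: "nat \<Rightarrow> real"
    assume h: "y \<in> carrier_vec d \<and> (\<forall>s<d. y $ s \<ge> 0) \<and> y \<noteq> 0\<^sub>v d \<and>
            (\<forall>i<k. lam i \<ge> 0) \<and> (\<forall>i<k. \<forall>s<d. (A i *\<^sub>v y) $ s \<le> lam i * y $ s)"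
    then have yc: "y \<in> carrier_vec d" and ynn: "\<forall>s<d. y $ s \<ge> 0" and y0: "y \<noteq> 0\<^sub>v d"
      and lam0: "\<forall>i<k. lam i \<ge> 0" and sub: "\<forall>i<k. \<forall>s<d. (A i *\<^sub>v y) $ s \<le> lam i * y $ s" by auto
    have Msub: "\<forall>s<d. (M n *\<^sub>v y) $ s \<le> (\<Prod>i<k. lam i ^ n i) * y $ s" for n
    proof -
      have "subinv d (M n) (foldr (\<lambda>i c. lam i ^ n i * c) [0..<k] 1) y"
        unfolding M_def mpow_def by (rule subinv_fl) (use Anon sub lam0 yc in \<open>auto simp: subinv_def\<close>)
      then show ?thesis unfolding subinv_def foldr_prod .
    qed
    define L where "L = (\<Sum>n\<in>F. \<Prod>i<k. lam i ^ n i)"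
    have L0: "L \<ge> 0" unfolding L_def using lam0 by (intro sum_nonneg prod_nonneg) auto
    have AFsub: "\<forall>s<d. (AF *\<^sub>v y) $ s \<le> L * y $ s"
    proof (intro allI impI)
      fix s assume s: "s < d"
      have "(AF *\<^sub>v y) $ s = (\<Sum>n\<in>F. (M n *\<^sub>v y) $ s)" by (rule AFmv[OF yc s])
      also have "\<dots> \<le> (\<Sum>n\<in>F. (\<Prod>i<k. lam i ^ n i) * y $ s)" using Msub s by (intro sum_mono) auto
      also have "\<dots> = L * y $ s" unfolding L_def by (simp add: sum_distrib_right)
      finally show "(AF *\<^sub>v y) $ s \<le> L * y $ s" .
    qed
    have yp: "\<forall>s<d. y $ s > 0" by (rule ypos[OF yc ynn y0 AFsub L0])
    have lamge: "\<forall>i<k. lam i \<ge> rho (A i)"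
    proof (intro allI impI)
      fix i assume i: "i < k"
      have Ai: "A i \<in> carrier_mat d d" using carr i by auto
      obtain e v where ev: "eigenvector (map_mat complex_of_real (A i)) v e" "norm e = rho (A i)"
        using rho_attained[OF Ai d] by auto
      have "norm e \<le> lam i" by (rule eig_bound[OF Ai _ yc yp _ ev(1) d]) (use nonneg sub i in auto)
      then show "lam i \<ge> rho (A i)" using ev(2) by simp
    qed
    show "(\<forall>s<d. y $ s > 0) \<and> (\<forall>i<k. lam i \<ge> rho (A i)) \<and>
            ((\<forall>i<k. lam i = rho (A i)) \<and> norm1 y = 1 \<longrightarrow> y = x)"
    proof (intro conjI impI)
      show "\<forall>s<d. y $ s > 0" by (rule yp)
      show "\<forall>i<k. lam i \<ge> rho (A i)" by (rule lamge)
    next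
      assume h2: "(\<forall>i<k. lam i = rho (A i)) \<and> norm1 y = 1"
      have "L = Lam" unfolding L_def Lam_def using h2 by (intro sum.cong prod.cong) auto
      then have "\<forall>s<d. (AF *\<^sub>v y) $ s \<le> r * y $ s" using AFsub rLam by simp
      then show "y = x" using unique[OF yc yp] h2 realL4[OF AFc AFp xc xpos AFx yc _ d] by blast
    qed
  qed
  have P5: "\<forall>n\<in>nvecs k. rho (mpow d k A n) = (\<Prod>i<k. rho (A i) ^ n i) \<and>
            (\<Prod>i<k. rho (A i) ^ n i) > 0"
  proof (intro ballI conjI)
    fix n
    have Mx: "M n *\<^sub>v x = (\<Prod>i<k. rho (A i) ^ n i) \<cdot>\<^sub>v x" by (rule Meig[OF xc Ax])
    show "rho (mpow d k A n) = (\<Prod>i<k. rho (A i) ^ n i)"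
    proof -
      have Mn: "mpow d k A n \<in> carrier_mat d d" "\<forall>s<d. \<forall>t<d. mpow d k A n $$ (s,t) \<ge> 0"
        using Mnon[of n] by (auto simp: nonneg_mat_def M_def)
      show ?thesis by (rule PF_rho[OF Mn xc xpos _ d]) (use Mx in \<open>simp add: M_def\<close>)
    qed
    show "(\<Prod>i<k. rho (A i) ^ n i) > 0" using rhopos by (intro prod_pos) auto
  qed
  show ?thesis using P1 P2 P3 P4 P5 by blast
qed

end
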